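(* Assume the setting in the context (in particular Assumption (A)). Let $\rho>0$, $z_0\in V_f(\rho)$ and $\epsilon>0$, and run Algorithm $\mathcal{A}_*$ from $z_0$ with accuracy $\epsilon$, producing $z_j$, $s_j$, $n_j$, $m_j$ and $j_{out}$. Then: (i) for every $j\in\{0,\dots,j_{out}\}$ we have $z_j\in V_f(\rho)$, and the conclusions of the guarantee for $\mathcal{A}_d$ hold with $r=z_j$, $n=n_j$, $z=z_{j+1}$, $m=m_{j+1}$; namely $f(z_{j+1})\leq f(z_j)-\frac{1}{2L_f}\|g(z_j)\|_*^2$, $f(z_{j+1})-f^*\leq\left(\frac{\bar n_\rho}{m_{j+1}+1}\right)^2(f(z_j)-f^* )$, and $n_j\in(0,\lceil4\bar n_\rho\rceil]\Rightarrow m_{j+1}\in[n_j,\lceil4\bar n_\rho\rceil]$; (ii) the sequence $\{m_j\}$ is non-decreasing; in particular $m_j\leq n_j\leq m_{j+1}$ for all $j\in\{0,\dots,j_{out}\}$; (iii) $s_j\in(0,1]$ for all $j\in\{2,\dots,j_{out}\}$.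
   Context: Let $f:\mathbb{R}^n\to(-\infty,\infty]$ be a proper closed convex function such that the problem $f^*=\min_{x\in\mathbb{R}^n}f(x)$ is solvable. Let $\Omega_f=\{x: f(x)=f^*\}$, fix a norm $\|\cdot\|$ on $\mathbb{R}^n$ with dual norm $\|y\|_*=\sup\{y^Tz:\|z\|\leq 1\}$, and for $x\in\mathbb{R}^n$ let $\bar x=\arg\min_{z\in\Omega_f}\|x-z\|$. For $\rho\geq0$ let $V_f(\rho)=\{x: f(x)-f^*\leq\rho\}$. Let $\mathcal{A}$ be an iterative algorithm: for $x_0\in\mathrm{dom} f$ and integer $k\geq1$, $\mathcal{A}(x_0,k)$ denotes its $k$-th iterate started from $x_0$ (and $\mathcal{A}(x_0,0)=x_0$). Assumption (A): (i) for every $\rho>0$ there is $\mu_\rho>0$ with $f(x_0)-f^*\geq\frac{\mu_\rho}{2}\|x_0-\bar x_0\|^2$ for all $x_0\in V_f(\rho)$; (ii) there exist $a_f>0$, $L_f>0$ and $g:\mathbb{R}^n\to\mathbb{R}^n$ with $g(x)=0\iff x\in\Omega_f$ such that for every $x_0\in\mathrm{dom} f$: $f(\mathcal{A}(x_0,1))\leq f(x_0)-\frac{1}{2L_f}\|g(x_0)\|_*^2$ and $f(\mathcal{A}(x_0,k))-f^*\leq\frac{a_f}{(k+1)^2}\|x_0-\bar x_0\|^2$ for all $k\geq1$; (iii) $\bar n_\rho:=\max\{\frac12,\sqrt{2a_f/\mu_\rho}\}$. Procedure $\mathcal{A}_d(r,n)$ (input $r\in\mathrm{dom} f$, $n\in\mathbb{R}$):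 set $x_0=r$, $k=0$. Repeat: $k\gets k+1$; set $x_k=\mathcal{A}(x_0,k)$ if $f(\mathcal{A}(x_0,k))\leq f(x_{k-1})$, and $x_k=x_{k-1}$ otherwise; $\ell=\lfloor k/2\rfloor$; until $k\geq n$ and $f(x_\ell)-f(x_k)\leq\frac13(f(x_0)-f(x_\ell))$. Output $z=x_k$, $m=k$. Algorithm $\mathcal{A}_*(z_0)$ (input $z_0\in\mathrm{dom} f$, $\epsilon>0$): set $m_0=1$, $m_{-1}=1$, $j=-1$. Repeat: $j\gets j+1$; $s_j=\sqrt{\frac{f(z_{j-1})-f(z_j)}{f(z_{j-2})-f(z_j)}}$ if $j\geq2$ and $s_j=0$ otherwise; $n_j=\max\{m_j,4s_jm_{j-1}\}$; $[z_{j+1},m_{j+1}]=\mathcal{A}_d(z_j,n_j)$; until $f(z_j)-f(z_{j+1})\leq\epsilon$. Output $z_{out}=z_{j+1}$, $j_{out}=j$. *)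

theory Defs
  imports "HOL-Analysis.Analysis" "HOL-Library.Extended_Real"
begin

text \<open>Extended-valued functions f : R^n -> (-inf, inf] are modelled as maps into ereal.\<close>

definition proper_fun :: "('a \<Rightarrow> ereal) \<Rightarrow> bool" where
  "proper_fun f \<longleftrightarrow> (\<forall>x. f x \<noteq> -\<infinity>) \<and> (\<exists>x. f x \<noteq> \<infinity>)"

definition closed_fun :: "('a::topological_space \<Rightarrow> ereal) \<Rightarrow> bool" where
  "closed_fun f \<longleftrightarrow> closed {p :: 'a \<times> real. f (fst p) \<le> ereal (snd p)}"

definition convex_fun :: "('a::real_vector \<Rightarrow> ereal) \<Rightarrow> bool" where
  "convex_fun f \<longleftrightarrow> (\<forall>x y u. 0 \<le> u \<and> u \<le> 1 \<longrightarrow>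
      f (u *\<^sub>R x + (1 - u) *\<^sub>R y) \<le> ereal u * f x + ereal (1 - u) * f y)"

definition efdom :: "('a \<Rightarrow> ereal) \<Rightarrow> 'a set" where
  "efdom f = {x. f x < \<infinity>}"

definition is_norm :: "('a::real_vector \<Rightarrow> real) \<Rightarrow> bool" where
  "is_norm N \<longleftrightarrow> (\<forall>x. N x = 0 \<longleftrightarrow> x = 0) \<and> (\<forall>x y. N (x + y) \<le> N x + N y)
     \<and> (\<forall>c x. N (c *\<^sub>R x) = \<bar>c\<bar> * N x)"

definition dual_norm :: "('a::real_inner \<Rightarrow> real) \<Rightarrow> 'a \<Rightarrow> real" where
  "dual_norm N y = Sup {y \<bullet> z | z. N z \<le> 1}"

definition optset :: "('a \<Rightarrow> ereal) \<Rightarrow> real \<Rightarrow> 'a set" where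
  "optset f fstar = {x. f x = ereal fstar}"

definition dist_opt :: "('a::real_vector \<Rightarrow> real) \<Rightarrow> ('a \<Rightarrow> ereal) \<Rightarrow> real \<Rightarrow> 'a \<Rightarrow> real" where
  "dist_opt N f fstar x = Inf ((\<lambda>z. N (x - z)) ` optset f fstar)"

definition sublevel :: "('a \<Rightarrow> ereal) \<Rightarrow> real \<Rightarrow> real \<Rightarrow> 'a set" where
  "sublevel f fstar \<rho> = {x. f x - ereal fstar \<le> ereal \<rho>}"

primrec Ad_seq :: "('a \<Rightarrow> ereal) \<Rightarrow> ('a \<Rightarrow> nat \<Rightarrow> 'a) \<Rightarrow> 'a \<Rightarrow> nat \<Rightarrow> 'a" where
  "Ad_seq f A r 0 = r"
| "Ad_seq f A r (Suc k) =
     (if f (A r (Suc k)) \<le> f (Ad_seq f A r k) then A r (Suc k) else Ad_seq f A r k)"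

definition Ad_stop :: "('a \<Rightarrow> ereal) \<Rightarrow> ('a \<Rightarrow> nat \<Rightarrow> 'a) \<Rightarrow> 'a \<Rightarrow> real \<Rightarrow> nat \<Rightarrow> bool" where
  "Ad_stop f A r n k \<longleftrightarrow> 1 \<le> k \<and> n \<le> real k \<and>
     f (Ad_seq f A r (k div 2)) - f (Ad_seq f A r k)
       \<le> ereal (1/3) * (f r - f (Ad_seq f A r (k div 2)))"

definition Ad_m :: "('a \<Rightarrow> ereal) \<Rightarrow> ('a \<Rightarrow> nat \<Rightarrow> 'a) \<Rightarrow> 'a \<Rightarrow> real \<Rightarrow> nat" where
  "Ad_m f A r n = (LEAST k. Ad_stop f A r n k)"

definition Ad_z :: "('a \<Rightarrow> ereal) \<Rightarrow> ('a \<Rightarrow> nat \<Rightarrow> 'a) \<Rightarrow> 'a \<Rightarrow> real \<Rightarrow> 'a" where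
  "Ad_z f A r n = Ad_seq f A r (Ad_m f A r n)"

text \<open>Algorithm A_*(z_0): astar j = (z_j, m_j). Here j = 0 .. ; m_0 = m_{-1} = 1, s_0 = s_1 = 0.\<close>

fun astar :: "('a \<Rightarrow> ereal) \<Rightarrow> ('a \<Rightarrow> nat \<Rightarrow> 'a) \<Rightarrow> 'a \<Rightarrow> nat \<Rightarrow> 'a \<times> nat" where
  "astar f A z0 0 = (z0, 1)"
| "astar f A z0 (Suc j) =
     (let zj = fst (astar f A z0 j);
          mj = snd (astar f A z0 j);
          s = (if 2 \<le> j then
                 sqrt ((real_of_ereal (f (fst (astar f A z0 (j - 1)))) - real_of_ereal (f zj)) /
                       (real_of_ereal (f (fst (astar f A z0 (j - 2)))) - real_of_ereal (f zj)))
               else 0);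
          mj1 = (if j = 0 then 1 else snd (astar f A z0 (j - 1)));
          n = max (real mj) (4 * s * real mj1)
      in (Ad_z f A zj n, Ad_m f A zj n))"

definition astar_z where "astar_z f A z0 j = fst (astar f A z0 j)"
definition astar_m where "astar_m f A z0 j = snd (astar f A z0 j)"

definition astar_s :: "('a \<Rightarrow> ereal) \<Rightarrow> ('a \<Rightarrow> nat \<Rightarrow> 'a) \<Rightarrow> 'a \<Rightarrow> nat \<Rightarrow> real" where
  "astar_s f A z0 j = (if 2 \<le> j then
      sqrt ((real_of_ereal (f (astar_z f A z0 (j - 1))) - real_of_ereal (f (astar_z f A z0 j))) /
            (real_of_ereal (f (astar_z f A z0 (j - 2))) - real_of_ereal (f (astar_z f A z0 j))))
      else 0)"

definition astar_n :: "('a \<Rightarrow> ereal) \<Rightarrow> ('a \<Rightarrow> nat \<Rightarrow> 'a) \<Rightarrow> 'a \<Rightarrow> nat \<Rightarrow> real" where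
  "astar_n f A z0 j = max (real (astar_m f A z0 j))
      (4 * astar_s f A z0 j * (if j = 0 then 1 else real (astar_m f A z0 (j - 1))))"

definition astar_stop :: "('a \<Rightarrow> ereal) \<Rightarrow> ('a \<Rightarrow> nat \<Rightarrow> 'a) \<Rightarrow> 'a \<Rightarrow> real \<Rightarrow> nat \<Rightarrow> bool" where
  "astar_stop f A z0 \<epsilon> j \<longleftrightarrow> f (astar_z f A z0 j) - f (astar_z f A z0 (Suc j)) \<le> ereal \<epsilon>"

definition astar_jout :: "('a \<Rightarrow> ereal) \<Rightarrow> ('a \<Rightarrow> nat \<Rightarrow> 'a) \<Rightarrow> 'a \<Rightarrow> real \<Rightarrow> nat" where
  "astar_jout f A z0 \<epsilon> = (LEAST j. astar_stop f A z0 \<epsilon> j)"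

end

theory Submission imports Defs begin

lemma Ad_seq_antimono:
  assumes "k \<le> k'" shows "f (Ad_seq f A r k') \<le> f (Ad_seq f A r k)"
  using assms
proof (induction k' rule: dec_induct)
  case base then show ?case by simp
next
  case (step q)
  have "f (Ad_seq f A r (Suc q)) \<le> f (Ad_seq f A r q)" by simp
  then show ?case using step.IH by (rule order_trans)
qed

lemma Ad_seq_le_A:
  assumes "1 \<le> k" shows "f (Ad_seq f A r k) \<le> f (A r k)"
proof -
  obtain q where q: "k = Suc q" using assms by (cases k) auto
  show ?thesis unfolding q by auto
qed

lemma ereal_fin:
  assumes "ereal c \<le> x" "x \<le> ereal d"
  shows "x = ereal (real_of_ereal x)"
  using assms by (cases x) auto

lemma Ad_main:
  fixes f :: "'a \<Rightarrow> ereal"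
  assumes fmin: "\<forall>x. ereal fstar \<le> f x" and fr: "f r = ereal (fstar + D)" and D0: "0 \<le> D"
    and nb: "1/2 \<le> nb"
    and H: "\<forall>k\<ge>1. f (A r k) \<le> ereal (fstar + nb\<^sup>2 / (real k + 1)\<^sup>2 * D)"
  shows "(\<exists>k. Ad_stop f A r n k) \<and> 1 \<le> Ad_m f A r n \<and> n \<le> real (Ad_m f A r n)
    \<and> f (Ad_z f A r n) \<le> f (A r 1)
    \<and> f (Ad_z f A r n) \<le> ereal (fstar + nb\<^sup>2 / (real (Ad_m f A r n) + 1)\<^sup>2 * D)
    \<and> (n \<le> real_of_int \<lceil>4 * nb\<rceil> \<longrightarrow> real (Ad_m f A r n) \<le> real_of_int \<lceil>4 * nb\<rceil>)"
proof -
  define e where "e k = real_of_ereal (f (Ad_seq f A r k)) - fstar" for k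
  have fx: "f (Ad_seq f A r k) = ereal (fstar + e k)" for k
  proof -
    have "f (Ad_seq f A r k) \<le> f (Ad_seq f A r 0)" by (rule Ad_seq_antimono) simp
    then have "f (Ad_seq f A r k) \<le> ereal (fstar + D)" using fr by simp
    then have "f (Ad_seq f A r k) = ereal (real_of_ereal (f (Ad_seq f A r k)))"
      using fmin ereal_fin by blast
    then show ?thesis unfolding e_def by simp
  qed
  have e0: "e 0 = D" unfolding e_def using fr by simp
  have emono: "e k' \<le> e k" if "k \<le> k'" for k k'
    using Ad_seq_antimono[OF that, of f A r] fx by simp
  have enn: "0 \<le> e k" for k
  proof -
    have "ereal fstar \<le> ereal (fstar + e k)" using fmin fx[of k] by metis
    then show ?thesis by simp
  qed
  have eD: "e k \<le> D" for k using emono[of 0 k] e0 by simp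
  have erate: "e k \<le> nb\<^sup>2 / (real k + 1)\<^sup>2 * D" if "1 \<le> k" for k
    using Ad_seq_le_A[OF that, of f A r] H that fx[of k] by (metis add_le_cancel_left ereal_less_eq(3) order_trans)
  have stop_iff: "Ad_stop f A r n k \<longleftrightarrow> 1 \<le> k \<and> n \<le> real k \<and> e (k div 2) - e k \<le> 1/3 * (D - e (k div 2))" for k
    unfolding Ad_stop_def fx fr by simp
  have suff: "Ad_stop f A r n K" if K1: "4 * nb \<le> real K" and K2: "n \<le> real K" for K
  proof -
    define l where "l = K div 2"
    have "2 \<le> real K" using K1 nb by linarith
    then have "2 \<le> K" by simp
    then have l1: "1 \<le> l" unfolding l_def by simp
    have "K \<le> 2 * l + 1" unfolding l_def by simp
    then have "real K \<le> 2 * real l + 1" by linarith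
    then have l2: "2 * nb \<le> real l + 1" using K1 by linarith
    have nbnn: "0 \<le> nb" using nb by simp
    have "nb / (real l + 1) \<le> 1/2" using l2 by (simp add: divide_simps)
    moreover have "0 \<le> nb / (real l + 1)" using nbnn by simp
    ultimately have "(nb / (real l + 1))\<^sup>2 \<le> (1/2)\<^sup>2" by (rule power_mono)
    then have "nb\<^sup>2 / (real l + 1)\<^sup>2 \<le> 1/4" by (simp add: power_divide)
    then have "nb\<^sup>2 / (real l + 1)\<^sup>2 * D \<le> 1/4 * D" using D0 by (rule mult_right_mono)
    then have "e l \<le> D / 4" using erate[OF l1] by linarith
    moreover have "0 \<le> e K" by (rule enn)
    ultimately have "e l - e K \<le> 1/3 * (D - e l)" by simp
    then show ?thesis unfolding stop_iff using \<open>2 \<le> K\<close> K2 l_def by simp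
  qed
  define K where "K = nat \<lceil>max n (4 * nb)\<rceil>"
  have "max n (4 * nb) \<le> real K" unfolding K_def by linarith
  then have ex: "\<exists>k. Ad_stop f A r n k" using suff by auto
  define m where "m = Ad_m f A r n"
  have sm: "Ad_stop f A r n m" unfolding m_def Ad_m_def using ex by (rule LeastI_ex)
  then have m1: "1 \<le> m" and mn: "n \<le> real m" unfolding stop_iff by auto
  have z: "Ad_z f A r n = Ad_seq f A r m" unfolding Ad_z_def m_def ..
  have "f (Ad_seq f A r m) \<le> f (Ad_seq f A r 1)" using m1 by (rule Ad_seq_antimono)
  also have "\<dots> \<le> f (A r 1)" by (rule Ad_seq_le_A) simp
  finally have c1: "f (Ad_z f A r n) \<le> f (A r 1)" using z by simp
  have c2: "f (Ad_z f A r n) \<le> ereal (fstar + nb\<^sup>2 / (real m + 1)\<^sup>2 * D)"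
    using z fx[of m] erate[OF m1] by simp
  have c3: "real m \<le> real_of_int \<lceil>4 * nb\<rceil>" if "n \<le> real_of_int \<lceil>4 * nb\<rceil>"
  proof -
    define K' where "K' = nat \<lceil>4 * nb\<rceil>"
    have rK: "real K' = real_of_int \<lceil>4 * nb\<rceil>" unfolding K'_def using nb by simp
    have "Ad_stop f A r n K'" using suff[of K'] rK that by linarith
    then have "m \<le> K'" unfolding m_def Ad_m_def by (rule Least_le)
    then show ?thesis using rK by linarith
  qed
  show ?thesis using ex m1 mn c1 c2 c3 unfolding m_def by blast
qed

lemma astar_z_Suc: "astar_z f A z0 (Suc j) = Ad_z f A (astar_z f A z0 j) (astar_n f A z0 j)"
  by (simp add: astar_z_def astar_n_def astar_s_def astar_m_def Let_def)

lemma astar_m_Suc: "astar_m f A z0 (Suc j) = Ad_m f A (astar_z f A z0 j) (astar_n f A z0 j)"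
  by (simp add: astar_z_def astar_n_def astar_s_def astar_m_def Let_def)

theorem mainTheorem3:
  fixes f :: "real^'n \<Rightarrow> ereal" and fstar :: real
    and N :: "real^'n \<Rightarrow> real"
    and A :: "real^'n \<Rightarrow> nat \<Rightarrow> real^'n"
    and g :: "real^'n \<Rightarrow> real^'n"
    and \<mu> :: "real \<Rightarrow> real" and a L \<rho> \<epsilon> :: real and z0 :: "real^'n"
  assumes f_proper: "proper_fun f" and f_closed: "closed_fun f" and f_convex: "convex_fun f"
    and fstar_min: "\<forall>x. ereal fstar \<le> f x" and fstar_att: "\<exists>x. f x = ereal fstar"
    and N_norm: "is_norm N"
    and A0: "\<forall>x. A x 0 = x"
    and A_i: "\<forall>r>0. \<mu> r > 0 \<and> (\<forall>x\<in>sublevel f fstar r.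
                 f x - ereal fstar \<ge> ereal (\<mu> r / 2 * (dist_opt N f fstar x)\<^sup>2))"
    and a_pos: "a > 0" and L_pos: "L > 0"
    and g_zero: "\<forall>x. g x = 0 \<longleftrightarrow> x \<in> optset f fstar"
    and A_descent: "\<forall>x\<in>efdom f. f (A x 1) \<le> f x - ereal (1 / (2 * L) * (dual_norm N (g x))\<^sup>2)"
    and A_rate: "\<forall>x\<in>efdom f. \<forall>k\<ge>1.
                  f (A x k) - ereal fstar \<le> ereal (a / (real k + 1)\<^sup>2 * (dist_opt N f fstar x)\<^sup>2)"
    and rho_pos: "\<rho> > 0" and z0_in: "z0 \<in> sublevel f fstar \<rho>" and eps_pos: "\<epsilon> > 0"
  shows
    "let nbar = max (1/2) (sqrt (2 * a / \<mu> \<rho>));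
         z = astar_z f A z0; m = astar_m f A z0; n = astar_n f A z0; s = astar_s f A z0;
         jout = astar_jout f A z0 \<epsilon>
     in
       \<comment> \<open>(0) the run is well defined: A_* stops, and every call of A_d stops\<close>
       (\<exists>j. astar_stop f A z0 \<epsilon> j) \<and>
       (\<forall>j\<le>jout. \<exists>k. Ad_stop f A (z j) (n j) k) \<and>
       \<comment> \<open>(i)\<close>
       (\<forall>j\<le>jout.
          z j \<in> sublevel f fstar \<rho> \<and>
          f (z (Suc j)) \<le> f (z j) - ereal (1 / (2 * L) * (dual_norm N (g (z j)))\<^sup>2) \<and>
          f (z (Suc j)) - ereal fstar \<le> ereal ((nbar / (real (m (Suc j)) + 1))\<^sup>2) * (f (z j) - ereal fstar) \<and>
          (0 < n j \<and> n j \<le> real_of_int \<lceil>4 * nbar\<rceil> \<longrightarrow>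
             n j \<le> real (m (Suc j)) \<and> real (m (Suc j)) \<le> real_of_int \<lceil>4 * nbar\<rceil>)) \<and>
       \<comment> \<open>(ii)\<close>
       (\<forall>i j. i \<le> j \<and> j \<le> Suc jout \<longrightarrow> m i \<le> m j) \<and>
       (\<forall>j\<le>jout. real (m j) \<le> n j \<and> n j \<le> real (m (Suc j))) \<and>
       \<comment> \<open>(iii)\<close>
       (\<forall>j. 2 \<le> j \<and> j \<le> jout \<longrightarrow> 0 < s j \<and> s j \<le> 1)"
proof -
  define nbar where "nbar = max (1/2) (sqrt (2 * a / \<mu> \<rho>))"
  define z where "z = astar_z f A z0"
  define m where "m = astar_m f A z0"
  define n where "n = astar_n f A z0"
  define s where "s = astar_s f A z0"
  define jout where "jout = astar_jout f A z0 \<epsilon>"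
  have mu: "\<mu> \<rho> > 0" using A_i rho_pos by blast
  have nb: "1/2 \<le> nbar" unfolding nbar_def by simp
  have nb2: "2 * a / \<mu> \<rho> \<le> nbar\<^sup>2"
  proof -
    have "sqrt (2 * a / \<mu> \<rho>) \<le> nbar" unfolding nbar_def by simp
    moreover have "0 \<le> 2 * a / \<mu> \<rho>" using a_pos mu by simp
    ultimately have "(sqrt (2 * a / \<mu> \<rho>))\<^sup>2 \<le> nbar\<^sup>2" by (intro power_mono) auto
    moreover note \<open>0 \<le> 2 * a / \<mu> \<rho>\<close>
    ultimately show ?thesis by simp
  qed
  have zsuc: "z (Suc j) = Ad_z f A (z j) (n j)" for j unfolding z_def n_def by (rule astar_z_Suc)
  have msuc: "m (Suc j) = Ad_m f A (z j) (n j)" for j unfolding z_def n_def m_def by (rule astar_m_Suc)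
  have desc: "f (z (Suc j)) \<le> f (z j)" for j
  proof -
    have "f (Ad_seq f A (z j) (Ad_m f A (z j) (n j))) \<le> f (Ad_seq f A (z j) 0)"
      by (rule Ad_seq_antimono) simp
    then show ?thesis unfolding zsuc Ad_z_def by simp
  qed
  have fzle: "f (z j) \<le> f z0" for j
  proof (induction j)
    case 0 then show ?case unfolding z_def astar_z_def by simp
  next
    case (Suc j) then show ?case using desc[of j] by (rule order_trans[rotated])
  qed
  have z0le: "f z0 \<le> ereal (fstar + \<rho>)"
  proof -
    have "f z0 - ereal fstar \<le> ereal \<rho>" using z0_in unfolding sublevel_def by simp
    then show ?thesis using fstar_min by (cases "f z0") auto
  qed
  define Dz where "Dz j = real_of_ereal (f (z j)) - fstar" for j
  have fz: "f (z j) = ereal (fstar + Dz j)" for j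
  proof -
    have "f (z j) \<le> ereal (fstar + \<rho>)" using fzle[of j] z0le by (rule order_trans)
    then have "f (z j) = ereal (real_of_ereal (f (z j)))" using fstar_min ereal_fin by blast
    then show ?thesis unfolding Dz_def by simp
  qed
  have Dz0: "0 \<le> Dz j" for j
  proof -
    have "ereal fstar \<le> ereal (fstar + Dz j)" using fstar_min fz[of j] by metis
    then show ?thesis by simp
  qed
  have Dzr: "Dz j \<le> \<rho>" for j
  proof -
    have "ereal (fstar + Dz j) \<le> ereal (fstar + \<rho>)" using fzle[of j] z0le fz[of j] by (metis order_trans)
    then show ?thesis by simp
  qed
  have sub: "z j \<in> sublevel f fstar \<rho>" for j
    unfolding sublevel_def using fz[of j] Dzr[of j] by simp
  have H: "\<forall>k\<ge>1. f (A (z j) k) \<le> ereal (fstar + nbar\<^sup>2 / (real k + 1)\<^sup>2 * Dz j)" for j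
  proof (intro allI impI)
    fix k :: nat assume k: "1 \<le> k"
    define d where "d = dist_opt N f fstar (z j)"
    have "f (z j) - ereal fstar \<ge> ereal (\<mu> \<rho> / 2 * d\<^sup>2)" using A_i rho_pos sub[of j] unfolding d_def by blast
    then have dD: "\<mu> \<rho> / 2 * d\<^sup>2 \<le> Dz j" using fz[of j] by simp
    have "z j \<in> efdom f" unfolding efdom_def using fz[of j] by simp
    then have r: "f (A (z j) k) - ereal fstar \<le> ereal (a / (real k + 1)\<^sup>2 * d\<^sup>2)"
      using A_rate k unfolding d_def by blast
    then have r2: "f (A (z j) k) \<le> ereal (fstar + a / (real k + 1)\<^sup>2 * d\<^sup>2)"
      using fstar_min by (cases "f (A (z j) k)") auto
    have "a * d\<^sup>2 = (2 * a / \<mu> \<rho>) * (\<mu> \<rho> / 2 * d\<^sup>2)" using mu by (simp add: field_simps)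
    also have "\<dots> \<le> (2 * a / \<mu> \<rho>) * Dz j" using dD a_pos mu by (intro mult_left_mono) auto
    also have "\<dots> \<le> nbar\<^sup>2 * Dz j" using nb2 Dz0[of j] by (rule mult_right_mono)
    finally have "a * d\<^sup>2 \<le> nbar\<^sup>2 * Dz j" .
    then have "a * d\<^sup>2 / (real k + 1)\<^sup>2 \<le> nbar\<^sup>2 * Dz j / (real k + 1)\<^sup>2"
      by (rule divide_right_mono) simp
    then have "a / (real k + 1)\<^sup>2 * d\<^sup>2 \<le> nbar\<^sup>2 / (real k + 1)\<^sup>2 * Dz j" by simp
    then show "f (A (z j) k) \<le> ereal (fstar + nbar\<^sup>2 / (real k + 1)\<^sup>2 * Dz j)"
      using r2 by (meson add_le_cancel_left ereal_less_eq(3) order_trans)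
  qed
  have AD: "(\<exists>k. Ad_stop f A (z j) (n j) k) \<and> 1 \<le> m (Suc j) \<and> n j \<le> real (m (Suc j))
    \<and> f (z (Suc j)) \<le> f (A (z j) 1)
    \<and> f (z (Suc j)) \<le> ereal (fstar + nbar\<^sup>2 / (real (m (Suc j)) + 1)\<^sup>2 * Dz j)
    \<and> (n j \<le> real_of_int \<lceil>4 * nbar\<rceil> \<longrightarrow> real (m (Suc j)) \<le> real_of_int \<lceil>4 * nbar\<rceil>)" for j
    unfolding zsuc msuc using Ad_main[where f=f and r="z j" and A=A and n="n j" and D="Dz j" and nb=nbar and fstar=fstar, OF fstar_min fz[of j] Dz0[of j] nb H[of j]] by blast
  have stopiff: "astar_stop f A z0 \<epsilon> j \<longleftrightarrow> Dz j - Dz (Suc j) \<le> \<epsilon>" for j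
    unfolding astar_stop_def z_def[symmetric] fz by simp
  have exstop: "\<exists>j. astar_stop f A z0 \<epsilon> j"
  proof (rule ccontr)
    assume "\<not> ?thesis"
    then have gt: "Dz j - Dz (Suc j) > \<epsilon>" for j using stopiff by (meson not_le)
    have bound: "Dz j \<le> Dz 0 - real j * \<epsilon>" for j
    proof (induction j)
      case 0 then show ?case by simp
    next
      case (Suc j) then show ?case using gt[of j] by (simp add: algebra_simps)
    qed
    obtain j :: nat where "Dz 0 / \<epsilon> < real j" using reals_Archimedean2 by blast
    then have "Dz 0 < real j * \<epsilon>" using eps_pos by (simp add: field_simps)
    then show False using bound[of j] Dz0[of j] by linarith
  qed
  have jstop: "astar_stop f A z0 \<epsilon> jout" unfolding jout_def astar_jout_def using exstop by (rule LeastI_ex)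
  have jnot: "\<not> astar_stop f A z0 \<epsilon> j" if "j < jout" for j
    using that unfolding jout_def astar_jout_def by (rule not_less_Least)
  have mn: "real (m j) \<le> n j" for j unfolding n_def m_def astar_n_def by simp
  have mmono1: "m j \<le> m (Suc j)" for j using mn[of j] AD[of j] by linarith
  have mmono: "\<forall>i j. i \<le> j \<and> j \<le> Suc jout \<longrightarrow> m i \<le> m j"
    using mmono1 by (meson lift_Suc_mono_le)
  have i_part: "\<forall>j\<le>jout.
          z j \<in> sublevel f fstar \<rho> \<and>
          f (z (Suc j)) \<le> f (z j) - ereal (1 / (2 * L) * (dual_norm N (g (z j)))\<^sup>2) \<and>
          f (z (Suc j)) - ereal fstar \<le> ereal ((nbar / (real (m (Suc j)) + 1))\<^sup>2) * (f (z j) - ereal fstar) \<and>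
          (0 < n j \<and> n j \<le> real_of_int \<lceil>4 * nbar\<rceil> \<longrightarrow>
             n j \<le> real (m (Suc j)) \<and> real (m (Suc j)) \<le> real_of_int \<lceil>4 * nbar\<rceil>)"
  proof (intro allI impI conjI)
    fix j assume "j \<le> jout"
    show "z j \<in> sublevel f fstar \<rho>" by (rule sub)
    have "z j \<in> efdom f" unfolding efdom_def using fz[of j] by simp
    then have "f (A (z j) 1) \<le> f (z j) - ereal (1 / (2 * L) * (dual_norm N (g (z j)))\<^sup>2)"
      using A_descent by blast
    then show "f (z (Suc j)) \<le> f (z j) - ereal (1 / (2 * L) * (dual_norm N (g (z j)))\<^sup>2)"
      using AD[of j] by (meson order_trans)
    have "f (z (Suc j)) \<le> ereal (fstar + nbar\<^sup>2 / (real (m (Suc j)) + 1)\<^sup>2 * Dz j)" using AD[of j] by blast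
    then have "Dz (Suc j) \<le> nbar\<^sup>2 / (real (m (Suc j)) + 1)\<^sup>2 * Dz j" using fz[of "Suc j"] by simp
    then show "f (z (Suc j)) - ereal fstar \<le> ereal ((nbar / (real (m (Suc j)) + 1))\<^sup>2) * (f (z j) - ereal fstar)"
      unfolding fz by (simp add: power_divide)
    show "n j \<le> real (m (Suc j))" using AD[of j] by blast
    show "real (m (Suc j)) \<le> real_of_int \<lceil>4 * nbar\<rceil>" if "0 < n j \<and> n j \<le> real_of_int \<lceil>4 * nbar\<rceil>"
      using AD[of j] that by blast
  qed
  have iii: "\<forall>j. 2 \<le> j \<and> j \<le> jout \<longrightarrow> 0 < s j \<and> s j \<le> 1"
  proof (intro allI impI)
    fix j assume j: "2 \<le> j \<and> j \<le> jout"
    have "\<not> astar_stop f A z0 \<epsilon> (j - 1)" using j by (intro jnot) auto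
    then have p1: "Dz (j - 1) - Dz j > \<epsilon>" using stopiff[of "j - 1"] j by auto
    have "f (z (Suc (j - 2))) \<le> f (z (j - 2))" by (rule desc)
    then have "Dz (j - 1) \<le> Dz (j - 2)" using j fz by (simp add: numeral_2_eq_2 Suc_diff_Suc)
    then have p2: "Dz (j - 1) - Dz j \<le> Dz (j - 2) - Dz j" by simp
    have sj: "s j = sqrt ((Dz (j - 1) - Dz j) / (Dz (j - 2) - Dz j))"
      unfolding s_def astar_s_def z_def[symmetric] Dz_def using j by simp
    have q: "0 < (Dz (j - 1) - Dz j) / (Dz (j - 2) - Dz j)" using p1 p2 eps_pos by simp
    have "(Dz (j - 1) - Dz j) / (Dz (j - 2) - Dz j) \<le> 1" using p1 p2 eps_pos by simp
    then show "0 < s j \<and> s j \<le> 1" unfolding sj using q by simp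
  qed
  have ii2: "\<forall>j\<le>jout. real (m j) \<le> n j \<and> n j \<le> real (m (Suc j))" using mn AD by blast
  have wd: "\<forall>j\<le>jout. \<exists>k. Ad_stop f A (z j) (n j) k" using AD by blast
  show ?thesis unfolding Let_def nbar_def[symmetric] z_def[symmetric] m_def[symmetric]
      n_def[symmetric] s_def[symmetric] jout_def[symmetric]
    using exstop wd i_part mmono ii2 iii by blast
qed

end
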